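(* Consider the quantized sensor-network model described in the context, and fix $p\in\{1,\dots,P\}$. If the dimension $D_p$ of the attack parameter $\boldsymbol{\tau}^{(p)}$ satisfies $$D_p>\sum_{j\in\mathcal{A}_p}K_j\,(R_j-1),$$ then the matrix $\mathbf{J}_{\boldsymbol{\tau}^{(p)}}$ is singular, and moreover the Fisher information matrix $\mathbf{J}_{\boldsymbol{\Theta}}$ is also singular.
   Context: Sensors are indexed by $j\in\{1,\dots,N\}$. Sensor $j$ acquires $K_j$ scalar measurements $\tilde x_{jk}$, $k=1,\dots,K_j$, each quantized by an $R_j$-level quantizer with fixed disjoint regions $I_j^{(1)},\dots,I_j^{(R_j)}$ partitioning $\mathbb{R}$, producing $\tilde u_{jk}=\sum_{r=1}^{R_j} r\,\mathbb{1}\{\tilde x_{jk}\in I_j^{(r)}\}$. The sensor set is partitioned into disjoint sets $\mathcal{A}_0$ (unattacked sensors) and $\mathcal{A}_1,\dots,\mathcal{A}_P$ (attacked sensors, grouped by attack). There is an unknown deterministic parameter $\boldsymbol{\theta}\in\mathbb{R}^{D_{\boldsymbol\theta}}$ and unknown deterministic attack parameters $\boldsymbol{\tau}^{(p)}\in\mathbb{R}^{D_p}$, $p=1,\dots,P$. The measurements $\{\tilde x_{jk}\}$ are independent; $\tilde x_{jk}$ has pdf $f_{jk}(\cdot\mid\boldsymbol\theta)$ if $j\in\mathcal{A}_0$ and pdf $g_{jk}(\cdot\mid\boldsymbol\theta,\boldsymbol\tau^{(p)})$ if $j\in\mathcal{A}_p$, $p\ge1$. Let $p_{jr}^{(k)}=\Pr(\tilde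 u_{jk}=r)$, i.e. $p_{jr}^{(k)}=\int_{I_j^{(r)}}f_{jk}(x\mid\boldsymbol\theta)\,dx$ for $j\in\mathcal{A}_0$ and $p_{jr}^{(k)}=\int_{I_j^{(r)}}g_{jk}(x\mid\boldsymbol\theta,\boldsymbol\tau^{(p)})\,dx$ for $j\in\mathcal{A}_p$; these are assumed positive and differentiable in the parameters. Let $\boldsymbol\Theta=[\boldsymbol\theta^T,(\boldsymbol\tau^{(1)})^T,\dots,(\boldsymbol\tau^{(P)})^T]^T$. The Fisher information matrix of the quantized data $\{\tilde u_{jk}\}$ for $\boldsymbol\Theta$ is $\mathbf{J}_{\boldsymbol\Theta}=\sum_{j=1}^N\sum_{k=1}^{K_j}\sum_{r=1}^{R_j}\frac{1}{p_{jr}^{(k)}}\frac{\partial p_{jr}^{(k)}}{\partial\boldsymbol\Theta}\Big[\frac{\partial p_{jr}^{(k)}}{\partial\boldsymbol\Theta}\Big]^T$. For $p\ge1$, $\mathbf{J}_{\boldsymbol\tau^{(p)}}=\sum_{j\in\mathcal{A}_p}\sum_{k=1}^{K_j}\sum_{r=1}^{R_j}\frac{1}{p_{jr}^{(k)}}\frac{\partial p_{jr}^{(k)}}{\partial\boldsymbol\tau^{(p)}}\Big[\frac{\partial p_{jr}^{(k)}}{\partial\boldsymbol\tau^{(p)}}\Big]^T\in\mathbb{R}^{D_p\times D_p}$ (the diagonal block of $\mathbf{J}_{\boldsymbol\Theta}$ corresponding to $\boldsymbol\tau^{(p)}$). *)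

theory Defs
  imports "HOL-Analysis.Analysis" "Jordan_Normal_Form.Determinant"
begin

text \<open>Real vectors of dimension d are encoded as functions nat => real
  vanishing from index d on.\<close>
definition rvec :: "nat \<Rightarrow> (nat \<Rightarrow> real) set" where
  "rvec d = {v. \<forall>i\<ge>d. v i = 0}"

text \<open>Layout of Theta = [theta; tau^(1); ...; tau^(P)]: theta occupies
  indices 0..<Dth, tau^(q) occupies indices off Dth D q ..< off Dth D q + D q.\<close>
definition off :: "nat \<Rightarrow> (nat \<Rightarrow> nat) \<Rightarrow> nat \<Rightarrow> nat" where
  "off Dth D q = Dth + (\<Sum>q'\<in>{1..<q}. D q')"

definition Dtot :: "nat \<Rightarrow> (nat \<Rightarrow> nat) \<Rightarrow> nat \<Rightarrow> nat" where
  "Dtot Dth D P = Dth + (\<Sum>q\<in>{1..P}. D q)"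

definition theta_of :: "nat \<Rightarrow> (nat \<Rightarrow> real) \<Rightarrow> nat \<Rightarrow> real" where
  "theta_of Dth Th = (\<lambda>i. if i < Dth then Th i else 0)"

definition tau_of :: "nat \<Rightarrow> (nat \<Rightarrow> nat) \<Rightarrow> nat \<Rightarrow> (nat \<Rightarrow> real) \<Rightarrow> nat \<Rightarrow> real" where
  "tau_of Dth D q Th = (\<lambda>i. if i < D q then Th (off Dth D q + i) else 0)"

text \<open>Probability p_{jr}^{(k)} of the quantized output r, as a function of Theta.
  grp j = 0 means j is in A_0; grp j = q \<ge> 1 means j is in A_q.
  f j k theta x is the pdf for unattacked sensors, g j k theta tau x the pdf for attacked ones.\<close>
definition qprob ::
  "(nat \<Rightarrow> nat \<Rightarrow> (nat \<Rightarrow> real) \<Rightarrow> real \<Rightarrow> real) \<Rightarrow>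
   (nat \<Rightarrow> nat \<Rightarrow> (nat \<Rightarrow> real) \<Rightarrow> (nat \<Rightarrow> real) \<Rightarrow> real \<Rightarrow> real) \<Rightarrow>
   (nat \<Rightarrow> nat \<Rightarrow> real set) \<Rightarrow> (nat \<Rightarrow> nat) \<Rightarrow> nat \<Rightarrow> (nat \<Rightarrow> nat) \<Rightarrow>
   nat \<Rightarrow> nat \<Rightarrow> nat \<Rightarrow> (nat \<Rightarrow> real) \<Rightarrow> real" where
  "qprob f g I grp Dth D j k r Th =
     (if grp j = 0 then (LINT x:I j r|lborel. f j k (theta_of Dth Th) x)
      else (LINT x:I j r|lborel. g j k (theta_of Dth Th) (tau_of Dth D (grp j) Th) x))"

definition pderiv_at :: "((nat \<Rightarrow> real) \<Rightarrow> real) \<Rightarrow> nat \<Rightarrow> (nat \<Rightarrow> real) \<Rightarrow> real" where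
  "pderiv_at h i Th = deriv (\<lambda>t. h (Th(i := Th i + t))) 0"

definition FIM_Theta where
  "FIM_Theta f g I grp Dth D P N K R Th =
     mat (Dtot Dth D P) (Dtot Dth D P) (\<lambda>(a,b).
       \<Sum>j\<in>{1..N}. \<Sum>k\<in>{1..K j}. \<Sum>r\<in>{1..R j}.
         1 / qprob f g I grp Dth D j k r Th
         * pderiv_at (qprob f g I grp Dth D j k r) a Th
         * pderiv_at (qprob f g I grp Dth D j k r) b Th)"

definition FIM_tau where
  "FIM_tau f g I grp Dth D N K R p Th =
     mat (D p) (D p) (\<lambda>(a,b).
       \<Sum>j\<in>{j\<in>{1..N}. grp j = p}. \<Sum>k\<in>{1..K j}. \<Sum>r\<in>{1..R j}.
         1 / qprob f g I grp Dth D j k r Th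
         * pderiv_at (qprob f g I grp Dth D j k r) (off Dth D p + a) Th
         * pderiv_at (qprob f g I grp Dth D j k r) (off Dth D p + b) Th)"

end

theory Submission
  imports Defs
begin

lemma sum_set_int:
  fixes h :: "real \<Rightarrow> real" and A :: "nat \<Rightarrow> real set"
  assumes fin: "finite S" and meas: "\<And>r. r \<in> S \<Longrightarrow> A r \<in> sets borel"
    and disj: "\<And>r r'. r \<in> S \<Longrightarrow> r' \<in> S \<Longrightarrow> r \<noteq> r' \<Longrightarrow> A r \<inter> A r' = {}"
    and cov: "(\<Union>r\<in>S. A r) = UNIV" and int: "integrable lborel h"
  shows "(\<Sum>r\<in>S. LINT x:A r|lborel. h x) = (LINT x|lborel. h x)"
proof -
  have i: "integrable lborel (\<lambda>x. indicator (A r) x *\<^sub>R h x)" if "r \<in> S" for r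
    using integrable_mult_indicator[of "A r" lborel h] meas[OF that] int by simp
  have "(\<Sum>r\<in>S. LINT x:A r|lborel. h x) = (LINT x|lborel. (\<Sum>r\<in>S. indicator (A r) x *\<^sub>R h x))"
    unfolding set_lebesgue_integral_def
    using Bochner_Integration.integral_sum[where I=S and M=lborel and f="\<lambda>r x. indicator (A r) x *\<^sub>R h x"] i by simp
  also have "\<dots> = (LINT x|lborel. h x)"
  proof (rule Bochner_Integration.integral_cong[OF refl])
    fix x
    obtain r0 where r0: "r0 \<in> S" "x \<in> A r0" using cov by blast
    have "(\<Sum>r\<in>S. indicator (A r) x *\<^sub>R h x) = (\<Sum>r\<in>S. (if r = r0 then h x else 0))"
      by (rule sum.cong) (use r0 disj in \<open>auto simp: indicator_def\<close>)
    also have "\<dots> = h x" using r0 fin by simp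
    finally show "(\<Sum>r\<in>S. indicator (A r) x *\<^sub>R h x) = h x" .
  qed
  finally show ?thesis .
qed

lemma deriv_sum_const:
  fixes h :: "nat \<Rightarrow> real \<Rightarrow> real"
  assumes fin: "finite S" and d: "\<And>r. r \<in> S \<Longrightarrow> h r differentiable (at 0)"
    and c: "\<And>t. (\<Sum>r\<in>S. h r t) = c"
  shows "(\<Sum>r\<in>S. deriv (h r) 0) = 0"
proof -
  have "((\<lambda>t. \<Sum>r\<in>S. h r t) has_real_derivative (\<Sum>r\<in>S. deriv (h r) 0)) (at 0)"
    by (rule DERIV_sum) (use d DERIV_deriv_iff_real_differentiable in blast)
  moreover have "((\<lambda>t. \<Sum>r\<in>S. h r t) has_real_derivative 0) (at 0)"
    using c by simp
  ultimately show ?thesis using DERIV_unique by blast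
qed

lemma triple_swap:
  fixes F :: "nat \<Rightarrow> nat \<Rightarrow> nat \<Rightarrow> real"
  shows "(\<Sum>b\<in>B. (\<Sum>j\<in>J. \<Sum>k\<in>K j. \<Sum>r\<in>R j. F j k r * G j k r b) * v b)
       = (\<Sum>j\<in>J. \<Sum>k\<in>K j. \<Sum>r\<in>R j. F j k r * (\<Sum>b\<in>B. G j k r b * v b))"
proof -
  have "(\<Sum>b\<in>B. (\<Sum>j\<in>J. \<Sum>k\<in>K j. \<Sum>r\<in>R j. F j k r * G j k r b) * v b)
     = (\<Sum>b\<in>B. \<Sum>j\<in>J. \<Sum>k\<in>K j. \<Sum>r\<in>R j. F j k r * (G j k r b * v b))"
    by (simp add: sum_distrib_right mult.assoc)
  also have "\<dots> = (\<Sum>j\<in>J. \<Sum>b\<in>B. \<Sum>k\<in>K j. \<Sum>r\<in>R j. F j k r * (G j k r b * v b))"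
    by (rule sum.swap)
  also have "\<dots> = (\<Sum>j\<in>J. \<Sum>k\<in>K j. \<Sum>b\<in>B. \<Sum>r\<in>R j. F j k r * (G j k r b * v b))"
    by (rule sum.cong[OF refl], rule sum.swap)
  also have "\<dots> = (\<Sum>j\<in>J. \<Sum>k\<in>K j. \<Sum>r\<in>R j. \<Sum>b\<in>B. F j k r * (G j k r b * v b))"
    by (rule sum.cong[OF refl], rule sum.cong[OF refl], rule sum.swap)
  also have "\<dots> = (\<Sum>j\<in>J. \<Sum>k\<in>K j. \<Sum>r\<in>R j. F j k r * (\<Sum>b\<in>B. G j k r b * v b))"
    by (simp add: sum_distrib_left)
  finally show ?thesis .
qed

lemma off_lt:
  assumes "1 \<le> q" "q < p"
  shows "off Dth D q + D q \<le> off Dth D p"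
proof -
  have "sum D {1..<Suc q} = sum D {1..<q} + D q" using assms(1) by simp
  moreover have "sum D {1..<Suc q} \<le> sum D {1..<p}"
    by (rule sum_mono2) (use assms in auto)
  ultimately show ?thesis unfolding off_def by simp
qed

lemma off_le_Dtot:
  assumes "1 \<le> p" "p \<le> P"
  shows "off Dth D p + D p \<le> Dtot Dth D P"
proof -
  have "sum D {1..<Suc p} = sum D {1..<p} + D p" using assms(1) by simp
  moreover have "sum D {1..<Suc p} \<le> sum D {1..P}"
    by (rule sum_mono2) (use assms in auto)
  ultimately show ?thesis unfolding off_def Dtot_def by simp
qed


theorem theorem1:
  fixes f :: "nat \<Rightarrow> nat \<Rightarrow> (nat \<Rightarrow> real) \<Rightarrow> real \<Rightarrow> real"
    and g :: "nat \<Rightarrow> nat \<Rightarrow> (nat \<Rightarrow> real) \<Rightarrow> (nat \<Rightarrow> real) \<Rightarrow> real \<Rightarrow> real"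
    and I :: "nat \<Rightarrow> nat \<Rightarrow> real set"
    and grp :: "nat \<Rightarrow> nat" and N P Dth p :: nat and D K R :: "nat \<Rightarrow> nat"
    and Th0 :: "nat \<Rightarrow> real"
  assumes grp_range: "\<And>j. j \<in> {1..N} \<Longrightarrow> grp j \<le> P"
    and regions_meas: "\<And>j r. j \<in> {1..N} \<Longrightarrow> r \<in> {1..R j} \<Longrightarrow> I j r \<in> sets borel"
    and regions_disj: "\<And>j r r'. j \<in> {1..N} \<Longrightarrow> r \<in> {1..R j} \<Longrightarrow> r' \<in> {1..R j} \<Longrightarrow>
          r \<noteq> r' \<Longrightarrow> I j r \<inter> I j r' = {}"
    and regions_cover: "\<And>j. j \<in> {1..N} \<Longrightarrow> (\<Union>r\<in>{1..R j}. I j r) = UNIV"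
    and f_pdf: "\<And>j k th. j \<in> {1..N} \<Longrightarrow> grp j = 0 \<Longrightarrow> k \<in> {1..K j} \<Longrightarrow> th \<in> rvec Dth \<Longrightarrow>
          (\<forall>x. 0 \<le> f j k th x) \<and> integrable lborel (f j k th) \<and> (LINT x|lborel. f j k th x) = 1"
    and g_pdf: "\<And>j k th tau. j \<in> {1..N} \<Longrightarrow> grp j \<ge> 1 \<Longrightarrow> k \<in> {1..K j} \<Longrightarrow>
          th \<in> rvec Dth \<Longrightarrow> tau \<in> rvec (D (grp j)) \<Longrightarrow>
          (\<forall>x. 0 \<le> g j k th tau x) \<and> integrable lborel (g j k th tau)
          \<and> (LINT x|lborel. g j k th tau x) = 1"
    and prob_pos: "\<And>j k r Th. j \<in> {1..N} \<Longrightarrow> k \<in> {1..K j} \<Longrightarrow> r \<in> {1..R j} \<Longrightarrow>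
          Th \<in> rvec (Dtot Dth D P) \<Longrightarrow> qprob f g I grp Dth D j k r Th > 0"
    and prob_diff: "\<And>j k r Th i. j \<in> {1..N} \<Longrightarrow> k \<in> {1..K j} \<Longrightarrow> r \<in> {1..R j} \<Longrightarrow>
          Th \<in> rvec (Dtot Dth D P) \<Longrightarrow> i < Dtot Dth D P \<Longrightarrow>
          (\<lambda>t. qprob f g I grp Dth D j k r (Th(i := Th i + t))) differentiable (at 0)"
    and Th0: "Th0 \<in> rvec (Dtot Dth D P)"
    and p: "p \<in> {1..P}"
    and dim: "D p > (\<Sum>j\<in>{j\<in>{1..N}. grp j = p}. K j * (R j - 1))"
  shows "det (FIM_tau f g I grp Dth D N K R p Th0) = 0
       \<and> det (FIM_Theta f g I grp Dth D P N K R Th0) = 0"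
proof -
  define Q where "Q = (\<lambda>j k r. qprob f g I grp Dth D j k r)"
  define pd where "pd = (\<lambda>j k r i. pderiv_at (Q j k r) i Th0)"
  define ofs where "ofs = off Dth D p"
  define Dp where "Dp = D p"
  define Dt where "Dt = Dtot Dth D P"
  have p1: "1 \<le> p" "p \<le> P" using p by auto
  have blk: "ofs + Dp \<le> Dt" using off_le_Dtot[OF p1] by (simp add: ofs_def Dp_def Dt_def)
  have ofs_ge: "Dth \<le> ofs" by (simp add: ofs_def off_def)
  have Rpos: "1 \<le> R j" if "j \<in> {1..N}" for j
  proof (rule ccontr)
    assume "\<not> 1 \<le> R j" then have "R j = 0" by simp
    with regions_cover[OF that] show False by simp
  qed
  have sum1: "(\<Sum>r\<in>{1..R j}. Q j k r Th) = 1" if j: "j \<in> {1..N}" and k: "k \<in> {1..K j}" for j k Th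
  proof (cases "grp j = 0")
    case True
    have th: "theta_of Dth Th \<in> rvec Dth" by (simp add: theta_of_def rvec_def)
    from f_pdf[OF j True k th] have fi: "integrable lborel (f j k (theta_of Dth Th))"
      and f1: "(LINT x|lborel. f j k (theta_of Dth Th) x) = 1" by auto
    have "(\<Sum>r\<in>{1..R j}. Q j k r Th) = (\<Sum>r\<in>{1..R j}. LINT x:I j r|lborel. f j k (theta_of Dth Th) x)"
      by (simp add: Q_def qprob_def True)
    also have "\<dots> = (LINT x|lborel. f j k (theta_of Dth Th) x)"
      by (rule sum_set_int) (use regions_meas[OF j] regions_disj[OF j] regions_cover[OF j] fi in auto)
    finally show ?thesis using f1 by simp
  next
    case False
    have th: "theta_of Dth Th \<in> rvec Dth" by (simp add: theta_of_def rvec_def)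
    have tau: "tau_of Dth D (grp j) Th \<in> rvec (D (grp j))" by (simp add: tau_of_def rvec_def)
    have g1: "1 \<le> grp j" using False by simp
    from g_pdf[OF j g1 k th tau]
    have fi: "integrable lborel (g j k (theta_of Dth Th) (tau_of Dth D (grp j) Th))"
      and f1: "(LINT x|lborel. g j k (theta_of Dth Th) (tau_of Dth D (grp j) Th) x) = 1" by auto
    have "(\<Sum>r\<in>{1..R j}. Q j k r Th) = (\<Sum>r\<in>{1..R j}. LINT x:I j r|lborel. g j k (theta_of Dth Th) (tau_of Dth D (grp j) Th) x)"
      by (simp add: Q_def qprob_def False)
    also have "\<dots> = (LINT x|lborel. g j k (theta_of Dth Th) (tau_of Dth D (grp j) Th) x)"
      by (rule sum_set_int) (use regions_meas[OF j] regions_disj[OF j] regions_cover[OF j] fi in auto)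
    finally show ?thesis using f1 by simp
  qed
  have pdsum: "(\<Sum>r\<in>{1..R j}. pd j k r i) = 0"
    if j: "j \<in> {1..N}" and k: "k \<in> {1..K j}" and i: "i < Dt" for j k i
    unfolding pd_def pderiv_at_def
    by (rule deriv_sum_const[where c=1])
      (use prob_diff[OF j k _ Th0] i sum1[OF j k] in \<open>auto simp: Q_def Dt_def\<close>)
  have pd_other: "pd j k r (ofs + a) = 0" if j: "j \<in> {1..N}" and ne: "grp j \<noteq> p" and a: "a < Dp" for j k r a
  proof -
    have theq: "theta_of Dth (Th0(ofs + a := x)) = theta_of Dth Th0" for x
      using ofs_ge by (auto simp: theta_of_def)
    have eq: "Q j k r (Th0(ofs + a := x)) = Q j k r Th0" for x
    proof (cases "grp j = 0")
      case True
      then show ?thesis by (simp add: Q_def qprob_def theq)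
    next
      case False
      define q where "q = grp j"
      have q1: "1 \<le> q" "q \<le> P" "q \<noteq> p" using False grp_range[OF j] ne by (auto simp: q_def)
      have neq: "off Dth D q + i \<noteq> ofs + a" if "i < D q" for i
      proof (cases "q < p")
        case True then show ?thesis using off_lt[of q p Dth D] q1 that by (simp add: ofs_def)
      next
        case False then have "p < q" using q1 by simp
        then show ?thesis using off_lt[of p q Dth D] p1 a by (simp add: ofs_def Dp_def)
      qed
      have "tau_of Dth D q (Th0(ofs + a := x)) = tau_of Dth D q Th0"
        using neq by (auto simp: tau_of_def)
      then show ?thesis using False by (simp add: Q_def qprob_def q_def theq)
    qed
    show ?thesis unfolding pd_def pderiv_at_def using eq DERIV_imp_deriv[OF DERIV_const] by simp
  qed
  define A where "A = {j\<in>{1..N}. grp j = p}"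
  define E where "E = Sigma A (\<lambda>j. {1..K j} \<times> {1..R j - 1})"
  define m where "m = (\<Sum>j\<in>A. K j * (R j - 1))"
  have finE: "finite E" by (simp add: E_def A_def)
  have cardE: "card E = m" unfolding E_def m_def
    by (subst card_SigmaI) (auto simp: A_def card_cartesian_product)
  have mlt: "m < Dp" using dim by (simp add: m_def A_def Dp_def)
  obtain e where e: "bij_betw e {0..<m} E" using ex_bij_betw_nat_finite[OF finE] cardE by auto
  define c where "c = (\<lambda>i. vec Dp (\<lambda>a. if i < m then (case e i of (j,k,r) \<Rightarrow> pd j k r (ofs + a)) else 0))"
  define M where "M = mat\<^sub>r Dp Dp (\<lambda>i. if i = m then 0\<^sub>v Dp else c i)"
  have "det M = 0" unfolding M_def by (rule det_row_0[OF mlt]) (auto simp: c_def)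
  moreover have Mc: "M \<in> carrier_mat Dp Dp" by (simp add: M_def)
  ultimately obtain v where v: "v \<in> carrier_vec Dp" "v \<noteq> 0\<^sub>v Dp" "M *\<^sub>v v = 0\<^sub>v Dp"
    using det_0_iff_vec_prod_zero[OF Mc] by blast
  have kerE: "(\<Sum>a=0..<Dp. pd j k r (ofs + a) * v $ a) = 0" if jkr: "(j,k,r) \<in> E" for j k r
  proof -
    obtain i where i: "i < m" "e i = (j,k,r)" using e jkr unfolding bij_betw_def by force
    have "(M *\<^sub>v v) $ i = 0" using v(3) i mlt by simp
    moreover have "(M *\<^sub>v v) $ i = c i \<bullet> v" using i mlt by (simp add: M_def c_def)
    moreover have "c i \<bullet> v = (\<Sum>a=0..<Dp. pd j k r (ofs + a) * v $ a)"
      using i v(1) by (simp add: c_def scalar_prod_def)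
    ultimately show ?thesis by simp
  qed
  have ker_all: "(\<Sum>a=0..<Dp. pd j k r (ofs + a) * v $ a) = 0"
    if j: "j \<in> {1..N}" and k: "k \<in> {1..K j}" and r: "r \<in> {1..R j}" for j k r
  proof (cases "grp j = p")
    case False
    then show ?thesis using pd_other[OF j False] by simp
  next
    case True
    show ?thesis
    proof (cases "r < R j")
      case True
      then show ?thesis using kerE[of j k r] j k r \<open>grp j = p\<close> by (simp add: E_def A_def)
    next
      case False
      then have rR: "r = R j" using r by simp
      have split: "(\<Sum>r\<in>{1..R j}. h r) = h (R j) + (\<Sum>r\<in>{1..R j - 1}. h r)" for h :: "nat \<Rightarrow> real"
      proof -
        obtain n where n: "R j = Suc n" using Rpos[OF j] by (cases "R j") auto
        show ?thesis by (simp add: n sum.cl_ivl_Suc)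
      qed
      have pdR: "pd j k (R j) (ofs + a) = - (\<Sum>r\<in>{1..R j - 1}. pd j k r (ofs + a))" if a: "a < Dp" for a
        using pdsum[OF j k, of "ofs + a"] split[of "\<lambda>r. pd j k r (ofs + a)"] a blk by simp
      have "(\<Sum>a=0..<Dp. pd j k r (ofs + a) * v $ a)
          = (\<Sum>a=0..<Dp. - (\<Sum>r\<in>{1..R j - 1}. pd j k r (ofs + a) * v $ a))"
        by (rule sum.cong) (auto simp: rR pdR sum_distrib_right)
      also have "\<dots> = - (\<Sum>r\<in>{1..R j - 1}. \<Sum>a=0..<Dp. pd j k r (ofs + a) * v $ a)"
        by (simp add: sum_negf sum.swap[of _ "{0..<Dp}"])
      also have "\<dots> = 0"
        using kerE \<open>grp j = p\<close> j k by (simp add: E_def A_def)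
      finally show ?thesis .
    qed
  qed
  have Jt: "FIM_tau f g I grp Dth D N K R p Th0 *\<^sub>v v = 0\<^sub>v Dp"
  proof (rule eq_vecI)
    fix a assume "a < dim_vec (0\<^sub>v Dp)"
    then have a: "a < Dp" by simp
    have "(FIM_tau f g I grp Dth D N K R p Th0 *\<^sub>v v) $ a
       = (\<Sum>b\<in>{0..<Dp}. (\<Sum>j\<in>A. \<Sum>k\<in>{1..K j}. \<Sum>r\<in>{1..R j}.
             (1 / Q j k r Th0 * pd j k r (ofs + a)) * pd j k r (ofs + b)) * v $ b)"
      using a v(1) by (simp add: FIM_tau_def scalar_prod_def Q_def pd_def ofs_def Dp_def A_def)
    also have "\<dots> = (\<Sum>j\<in>A. \<Sum>k\<in>{1..K j}. \<Sum>r\<in>{1..R j}.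
             (1 / Q j k r Th0 * pd j k r (ofs + a)) * (\<Sum>b\<in>{0..<Dp}. pd j k r (ofs + b) * v $ b))"
      by (rule triple_swap)
    also have "\<dots> = 0"
      by (intro sum.neutral ballI) (simp add: ker_all A_def)
    finally show "(FIM_tau f g I grp Dth D N K R p Th0 *\<^sub>v v) $ a = 0\<^sub>v Dp $ a" using a by simp
  qed (simp add: FIM_tau_def Dp_def)
  have tauc: "FIM_tau f g I grp Dth D N K R p Th0 \<in> carrier_mat Dp Dp"
    by (simp add: FIM_tau_def Dp_def)
  have det1: "det (FIM_tau f g I grp Dth D N K R p Th0) = 0"
    using det_0_iff_vec_prod_zero[OF tauc] v Jt by blast
  define y where "y = vec Dt (\<lambda>b. if ofs \<le> b \<and> b < ofs + Dp then v $ (b - ofs) else 0)"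
  have inner: "(\<Sum>b\<in>{0..<Dt}. pd j k r b * y $ b) = (\<Sum>a=0..<Dp. pd j k r (ofs + a) * v $ a)" for j k r
  proof -
    have "(\<Sum>b\<in>{0..<Dt}. pd j k r b * y $ b) = (\<Sum>b\<in>{ofs..<ofs + Dp}. pd j k r b * y $ b)"
      by (rule sum.mono_neutral_right) (use blk in \<open>auto simp: y_def\<close>)
    also have "\<dots> = (\<Sum>b\<in>{ofs..<ofs + Dp}. pd j k r b * v $ (b - ofs))"
      by (rule sum.cong) (use blk in \<open>auto simp: y_def\<close>)
    also have "\<dots> = (\<Sum>a=0..<Dp. pd j k r (ofs + a) * v $ a)"
      using sum.shift_bounds_nat_ivl[of "\<lambda>b. pd j k r b * v $ (b - ofs)" 0 ofs Dp]
      by (simp add: add.commute)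
    finally show ?thesis .
  qed
  have JT: "FIM_Theta f g I grp Dth D P N K R Th0 *\<^sub>v y = 0\<^sub>v Dt"
  proof (rule eq_vecI)
    fix a assume "a < dim_vec (0\<^sub>v Dt)"
    then have a: "a < Dt" by simp
    have "(FIM_Theta f g I grp Dth D P N K R Th0 *\<^sub>v y) $ a
       = (\<Sum>b\<in>{0..<Dt}. (\<Sum>j\<in>{1..N}. \<Sum>k\<in>{1..K j}. \<Sum>r\<in>{1..R j}.
             (1 / Q j k r Th0 * pd j k r a) * pd j k r b) * y $ b)"
      using a by (simp add: FIM_Theta_def scalar_prod_def Q_def pd_def Dt_def y_def)
    also have "\<dots> = (\<Sum>j\<in>{1..N}. \<Sum>k\<in>{1..K j}. \<Sum>r\<in>{1..R j}.
             (1 / Q j k r Th0 * pd j k r a) * (\<Sum>b\<in>{0..<Dt}. pd j k r b * y $ b))"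
      by (rule triple_swap)
    also have "\<dots> = 0"
      by (intro sum.neutral ballI) (simp add: ker_all inner)
    finally show "(FIM_Theta f g I grp Dth D P N K R Th0 *\<^sub>v y) $ a = 0\<^sub>v Dt $ a" using a by simp
  qed (simp add: FIM_Theta_def Dt_def)
  obtain a0 where a0: "a0 < Dp" "v $ a0 \<noteq> 0"
  proof -
    have "\<exists>a<Dp. v $ a \<noteq> 0"
    proof (rule ccontr)
      assume "\<not> ?thesis"
      then have "v = 0\<^sub>v Dp" using v(1) by (intro eq_vecI) auto
      with v(2) show False by simp
    qed
    then show ?thesis using that by blast
  qed
  have yc: "y \<in> carrier_vec Dt" by (simp add: y_def)
  have ynz: "y \<noteq> 0\<^sub>v Dt"
  proof
    assume "y = 0\<^sub>v Dt"
    then have "y $ (ofs + a0) = 0" using a0 blk by simp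
    moreover have "y $ (ofs + a0) = v $ a0" using a0 blk by (simp add: y_def)
    ultimately show False using a0 by simp
  qed
  have thc: "FIM_Theta f g I grp Dth D P N K R Th0 \<in> carrier_mat Dt Dt"
    by (simp add: FIM_Theta_def Dt_def)
  have det2: "det (FIM_Theta f g I grp Dth D P N K R Th0) = 0"
    using det_0_iff_vec_prod_zero[OF thc] yc ynz JT by blast
  show ?thesis using det1 det2 by simp
qed

end
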